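(* Let $G$ and $H$ be connected graphs with $\partial(G)=\sigma(G)$ and $\partial(H)=\sigma(H)$. Then $$dim_s(G\square H)=\min\{|\partial(G)|(|\partial(H)|-1),\ |\partial(H)|(|\partial(G)|-1)\}.$$
   Context: Graphs are finite, simple, undirected; $d_G$ is the shortest-path distance. A vertex is simplicial if its neighbors induce a complete graph; $\sigma(G)$ is the set of simplicial vertices. A vertex $u$ is maximally distant from $v$ if $d_G(v,w)\le d_G(u,v)$ for every neighbor $w$ of $u$; distinct $u,v$ are mutually maximally distant if each is maximally distant from the other; the boundary $\partial(G)$ is the set of vertices mutually maximally distant with some vertex. $I_G[u,v]$ is the set of vertices on some shortest $u$–$v$ path; $w$ strongly resolves $u,v$ if $v\in I_G[u,w]$ or $u\in I_G[v,w]$; $dim_s(G)$ is the minimum size of a set $S\subseteq V(G)$ such that every pair of vertices is strongly resolved by some vertex of $S$. $G\square H$ is the Cartesian product: vertex set $V(G)\times V(H)$, $(a,b)\sim(c,d)$ iff ($a=c$ and $bd\in E(H)$) or ($b=d$ and $ac\in E(G)$). *)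

theory Defs
  imports Main
begin

record 'a graph =
  verts :: "'a set"
  adj :: "'a \<Rightarrow> 'a \<Rightarrow> bool"

definition graph :: "'a graph \<Rightarrow> bool" where
  "graph G \<longleftrightarrow> finite (verts G) \<and> verts G \<noteq> {} \<and>
     (\<forall>u v. adj G u v \<longrightarrow> u \<in> verts G \<and> v \<in> verts G) \<and>
     (\<forall>u v. adj G u v \<longrightarrow> adj G v u) \<and> (\<forall>u. \<not> adj G u u)"

fun walk :: "'a graph \<Rightarrow> 'a list \<Rightarrow> bool" where
  "walk G [] = False"
| "walk G [v] = (v \<in> verts G)"
| "walk G (u # v # vs) = (adj G u v \<and> walk G (v # vs))"

definition connected :: "'a graph \<Rightarrow> bool" where
  "connected G \<longleftrightarrow> (\<forall>u\<in>verts G. \<forall>v\<in>verts G.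
     \<exists>p. walk G p \<and> hd p = u \<and> last p = v)"

definition gdist :: "'a graph \<Rightarrow> 'a \<Rightarrow> 'a \<Rightarrow> nat" where
  "gdist G u v = (LEAST n. \<exists>p. walk G p \<and> hd p = u \<and> last p = v \<and> length p = Suc n)"

definition nbrs :: "'a graph \<Rightarrow> 'a \<Rightarrow> 'a set" where
  "nbrs G v = {w. adj G v w}"

definition simplicial :: "'a graph \<Rightarrow> 'a \<Rightarrow> bool" where
  "simplicial G v \<longleftrightarrow> v \<in> verts G \<and>
     (\<forall>x\<in>nbrs G v. \<forall>y\<in>nbrs G v. x \<noteq> y \<longrightarrow> adj G x y)"

definition simplicial_set :: "'a graph \<Rightarrow> 'a set" where
  "simplicial_set G = {v\<in>verts G. simplicial G v}"

definition max_distant :: "'a graph \<Rightarrow> 'a \<Rightarrow> 'a \<Rightarrow> bool" where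
  "max_distant G u v \<longleftrightarrow> (\<forall>w\<in>nbrs G u. gdist G v w \<le> gdist G u v)"

definition mutually_max_distant :: "'a graph \<Rightarrow> 'a \<Rightarrow> 'a \<Rightarrow> bool" where
  "mutually_max_distant G u v \<longleftrightarrow> u \<noteq> v \<and> max_distant G u v \<and> max_distant G v u"

definition boundary :: "'a graph \<Rightarrow> 'a set" where
  "boundary G = {u\<in>verts G. \<exists>v\<in>verts G. mutually_max_distant G u v}"

definition interval :: "'a graph \<Rightarrow> 'a \<Rightarrow> 'a \<Rightarrow> 'a set" where
  "interval G u v = {w\<in>verts G. gdist G u w + gdist G w v = gdist G u v}"

definition strongly_resolves :: "'a graph \<Rightarrow> 'a \<Rightarrow> 'a \<Rightarrow> 'a \<Rightarrow> bool" where
  "strongly_resolves G w u v \<longleftrightarrow> v \<in> interval G u w \<or> u \<in> interval G v w"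

definition strong_resolving_set :: "'a graph \<Rightarrow> 'a set \<Rightarrow> bool" where
  "strong_resolving_set G S \<longleftrightarrow> S \<subseteq> verts G \<and>
     (\<forall>u\<in>verts G. \<forall>v\<in>verts G. u \<noteq> v \<longrightarrow> (\<exists>w\<in>S. strongly_resolves G w u v))"

definition strong_metric_dim :: "'a graph \<Rightarrow> nat" where
  "strong_metric_dim G = (LEAST k. \<exists>S. strong_resolving_set G S \<and> card S = k)"

definition cart_prod :: "'a graph \<Rightarrow> 'b graph \<Rightarrow> ('a \<times> 'b) graph" where
  "cart_prod G H = \<lparr> verts = verts G \<times> verts H,
     adj = (\<lambda>(a, b) (c, d). (a = c \<and> a \<in> verts G \<and> adj H b d) \<or> (b = d \<and> b \<in> verts H \<and> adj G a c)) \<rparr>"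

end

theory Submission
  imports Defs
begin

lemma walk_nonempty: "walk G p \<Longrightarrow> p \<noteq> []" by (cases p) auto

lemma walk_verts: "graph G \<Longrightarrow> walk G p \<Longrightarrow> set p \<subseteq> verts G"
  by (induction G p rule: walk.induct) (auto simp: graph_def)

lemma walk_app: "graph G \<Longrightarrow> p \<noteq> [] \<Longrightarrow> q \<noteq> [] \<Longrightarrow>
   walk G (p @ q) \<longleftrightarrow> walk G p \<and> walk G q \<and> adj G (last p) (hd q)"
proof (induction p)
  case Nil then show ?case by simp
next
  case (Cons a p)
  show ?case
  proof (cases "p = []")
    case True
    then obtain b q' where q: "q = b # q'" using Cons by (cases q) auto
    then show ?thesis using True Cons.prems by (auto simp: graph_def)
  next
    case False
    then obtain b p' where p: "p = b # p'" by (cases p) auto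
    then show ?thesis using Cons by auto
  qed
qed

lemma walk_append: "graph G \<Longrightarrow> walk G p \<Longrightarrow> adj G (last p) w \<Longrightarrow> walk G (p @ [w])"
  using walk_app[of G p "[w]"] walk_nonempty[of G p] by (auto simp: graph_def)

lemma walk_rev: "graph G \<Longrightarrow> walk G p \<Longrightarrow> walk G (rev p)"
proof (induction G p rule: walk.induct)
  case (3 G u v vs)
  have "walk G (rev (v # vs) @ [u])"
    using 3 walk_app[of G "rev (v#vs)" "[u]"] by (auto simp: graph_def)
  then show ?case by simp
qed auto

lemma walk_lip: "walk G p \<Longrightarrow> (\<forall>v w. adj G v w \<longrightarrow> f w \<le> f v + (1::nat)) \<Longrightarrow>
   f (last p) \<le> f (hd p) + (length p - 1)"
proof (induction G p rule: walk.induct)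
  case (3 G u v vs)
  then have "f (last (v # vs)) \<le> f v + length vs" by simp
  moreover have "f v \<le> f u + 1" using 3 by auto
  ultimately show ?case by simp
qed auto

lemma gdist_le: "walk G p \<Longrightarrow> hd p = u \<Longrightarrow> last p = v \<Longrightarrow> gdist G u v \<le> length p - 1"
  unfolding gdist_def
  apply (rule Least_le)
  using walk_nonempty[of G p] by (intro exI[of _ p]) auto

lemma gdist_walk: "connected G \<Longrightarrow> u \<in> verts G \<Longrightarrow> v \<in> verts G \<Longrightarrow>
   \<exists>p. walk G p \<and> hd p = u \<and> last p = v \<and> length p = Suc (gdist G u v)"
proof -
  assume c: "connected G" "u \<in> verts G" "v \<in> verts G"
  then obtain p where p: "walk G p" "hd p = u" "last p = v" unfolding connected_def by blast
  then have "\<exists>n p. walk G p \<and> hd p = u \<and> last p = v \<and> length p = Suc n"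
    using walk_nonempty[of G p] by (intro exI[of _ "length p - 1"] exI[of _ p]) auto
  then show ?thesis unfolding gdist_def by (rule LeastI_ex)
qed

lemma gd_refl: "u \<in> verts G \<Longrightarrow> gdist G u u = 0"
  using gdist_le[of G "[u]" u u] by simp

lemma gd_zero: "connected G \<Longrightarrow> u \<in> verts G \<Longrightarrow> v \<in> verts G \<Longrightarrow> gdist G u v = 0 \<Longrightarrow> u = v"
proof -
  assume a: "connected G" "u \<in> verts G" "v \<in> verts G" "gdist G u v = 0"
  then obtain p where p: "walk G p" "hd p = u" "last p = v" "length p = 1"
    using gdist_walk[of G u v] by auto
  then obtain x where "p = [x]" by (cases p) auto
  then show ?thesis using p by simp
qed

lemma gd_lip: "graph G \<Longrightarrow> connected G \<Longrightarrow> u \<in> verts G \<Longrightarrow> v \<in> verts G \<Longrightarrow> adj G v w \<Longrightarrow>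
  gdist G u w \<le> gdist G u v + 1"
proof -
  assume a: "graph G" "connected G" "u \<in> verts G" "v \<in> verts G" "adj G v w"
  then obtain p where p: "walk G p" "hd p = u" "last p = v" "length p = Suc (gdist G u v)"
    using gdist_walk[of G u v] by auto
  have "walk G (p @ [w])" using walk_append[of G p w] a p by auto
  moreover have "hd (p @ [w]) = u" using p walk_nonempty[of G p] by auto
  ultimately have "gdist G u w \<le> length (p @ [w]) - 1" using gdist_le by fastforce
  then show ?thesis using p by simp
qed

lemma gd_sym: "graph G \<Longrightarrow> connected G \<Longrightarrow> u \<in> verts G \<Longrightarrow> v \<in> verts G \<Longrightarrow>
  gdist G u v = gdist G v u"
proof -
  have *: "gdist G x y \<le> gdist G y x" if h: "graph G" "connected G" "x \<in> verts G" "y \<in> verts G" for x y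
  proof -
    obtain p where p: "walk G p" "hd p = y" "last p = x" "length p = Suc (gdist G y x)"
      using gdist_walk[OF h(2) h(4) h(3)] by blast
    have "walk G (rev p)" using walk_rev p h by auto
    moreover have "hd (rev p) = x" "last (rev p) = y" using p walk_nonempty[of G p]
      by (auto simp: hd_rev last_rev)
    ultimately have "gdist G x y \<le> length (rev p) - 1" using gdist_le by fastforce
    then show ?thesis using p by simp
  qed
  show "graph G \<Longrightarrow> connected G \<Longrightarrow> u \<in> verts G \<Longrightarrow> v \<in> verts G \<Longrightarrow> ?thesis"
    using *[of u v] *[of v u] by auto
qed

lemma gd_desc: "graph G \<Longrightarrow> connected G \<Longrightarrow> u \<in> verts G \<Longrightarrow> v \<in> verts G \<Longrightarrow> u \<noteq> v \<Longrightarrow>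
  \<exists>w. adj G v w \<and> gdist G u w + 1 = gdist G u v"
proof -
  assume a: "graph G" "connected G" "u \<in> verts G" "v \<in> verts G" "u \<noteq> v"
  then obtain p where p: "walk G p" "hd p = u" "last p = v" "length p = Suc (gdist G u v)"
    using gdist_walk[of G u v] by auto
  have pne: "p \<noteq> []" using p walk_nonempty by auto
  define q where "q = butlast p"
  have pq: "p = q @ [v]" using pne p unfolding q_def by (metis append_butlast_last_id)
  have qne: "q \<noteq> []" using pq p a by (cases q) auto
  have wq: "walk G q" "adj G (last q) v" using walk_app[of G q "[v]"] a p pq qne by auto
  have hq: "hd q = u" using pq p qne by simp
  have lq: "last q \<in> verts G" using walk_verts[of G q] wq a qne by auto
  have "gdist G u (last q) \<le> length q - 1" using gdist_le[OF wq(1) hq] by simp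
  moreover have "gdist G u v \<le> gdist G u (last q) + 1" using gd_lip[of G u "last q" v] a wq lq by auto
  moreover have "length q = gdist G u v" using pq p by simp
  moreover have "adj G v (last q)" using wq a by (auto simp: graph_def)
  ultimately show ?thesis using qne by (intro exI[of _ "last q"]) (cases q; auto)
qed

lemma gd_tri: "graph G \<Longrightarrow> connected G \<Longrightarrow> u \<in> verts G \<Longrightarrow> v \<in> verts G \<Longrightarrow> w \<in> verts G \<Longrightarrow>
  gdist G u v \<le> gdist G u w + gdist G w v"
proof -
  assume g: "graph G" "connected G" and u: "u \<in> verts G" and w: "w \<in> verts G"
  have "\<And>v. v \<in> verts G \<Longrightarrow> gdist G w v = n \<Longrightarrow> gdist G u v \<le> gdist G u w + n" for n
  proof (induction n)
    case 0 then show ?case using gd_zero[of G w v] g w by auto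
  next
    case (Suc n)
    then have "w \<noteq> v" using gd_refl[of w G] by auto
    then obtain x where x: "adj G v x" "gdist G w x + 1 = gdist G w v"
      using gd_desc[of G w v] g w Suc by auto
    have xv: "x \<in> verts G" using x g by (auto simp: graph_def)
    have "gdist G u x \<le> gdist G u w + n" using Suc.IH[OF xv] x Suc by simp
    moreover have "gdist G u v \<le> gdist G u x + 1"
      using gd_lip[of G u x v] g u xv x by (auto simp: graph_def)
    ultimately show ?case by simp
  qed
  then show "v \<in> verts G \<Longrightarrow> ?thesis" by blast
qed


lemma gdist_char:
  assumes g: "graph K" and f0: "\<And>u. u \<in> verts K \<Longrightarrow> f u u = (0::nat)"
  and lip: "\<And>u v w. u \<in> verts K \<Longrightarrow> v \<in> verts K \<Longrightarrow> adj K v w \<Longrightarrow> f u w \<le> f u v + 1"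
  and desc: "\<And>u v. u \<in> verts K \<Longrightarrow> v \<in> verts K \<Longrightarrow> u \<noteq> v \<Longrightarrow> \<exists>w. adj K v w \<and> f u w + 1 = f u v"
  shows "connected K \<and> (\<forall>u\<in>verts K. \<forall>v\<in>verts K. gdist K u v = f u v)"
proof -
  have W: "\<And>u v. u \<in> verts K \<Longrightarrow> v \<in> verts K \<Longrightarrow> f u v = n \<Longrightarrow>
      \<exists>p. walk K p \<and> hd p = u \<and> last p = v \<and> length p = Suc n" for n
  proof (induction n)
    case 0
    then have "u = v" using desc[of u v] by force
    then show ?case using 0 by (intro exI[of _ "[u]"]) auto
  next
    case (Suc n)
    then have "u \<noteq> v" using f0 by auto
    then obtain w where w: "adj K v w" "f u w + 1 = f u v" using desc Suc.prems by blast
    have wv: "w \<in> verts K" using w g by (auto simp: graph_def)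
    obtain q where q: "walk K q" "hd q = u" "last q = w" "length q = Suc n"
      using Suc.IH[OF Suc.prems(1) wv] w Suc.prems by auto
    have "walk K (q @ [v])" using walk_append[OF g q(1)] q w g by (auto simp: graph_def)
    moreover have "hd (q @ [v]) = u" using q walk_nonempty[of K q] by auto
    ultimately show ?case using q by (intro exI[of _ "q @ [v]"]) auto
  qed
  have c: "connected K" unfolding connected_def using W by blast
  have "gdist K u v = f u v" if uv: "u \<in> verts K" "v \<in> verts K" for u v
  proof -
    obtain p where p: "walk K p" "hd p = u" "last p = v" "length p = Suc (f u v)"
      using W[OF uv] by blast
    have le1: "gdist K u v \<le> f u v" using gdist_le[OF p(1-3)] p(4) by simp
    obtain p' where p': "walk K p'" "hd p' = u" "last p' = v" "length p' = Suc (gdist K u v)"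
      using gdist_walk[OF c uv] by blast
    have "\<forall>x w. adj K x w \<longrightarrow> f u w \<le> f u x + 1" using lip uv g by (auto simp: graph_def)
    then have "f u v \<le> f u u + (length p' - 1)" using walk_lip[OF p'(1), of "f u"] p' by simp
    then show ?thesis using le1 f0 uv p' by simp
  qed
  then show ?thesis using c by blast
qed

lemma prod_graph: "graph G \<Longrightarrow> graph H \<Longrightarrow> graph (cart_prod G H)"
  unfolding graph_def cart_prod_def by auto

lemma prod_dist:
  assumes G: "graph G" "connected G" and H: "graph H" "connected H"
  shows "connected (cart_prod G H) \<and> (\<forall>u\<in>verts (cart_prod G H). \<forall>v\<in>verts (cart_prod G H).
     gdist (cart_prod G H) u v = gdist G (fst u) (fst v) + gdist H (snd u) (snd v))"
proof (rule gdist_char)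
  show "graph (cart_prod G H)" using prod_graph G H by auto
next
  fix u assume "u \<in> verts (cart_prod G H)"
  then show "gdist G (fst u) (fst u) + gdist H (snd u) (snd u) = 0"
    by (auto simp: cart_prod_def gd_refl)
next
  fix u v w assume a: "u \<in> verts (cart_prod G H)" "v \<in> verts (cart_prod G H)" "adj (cart_prod G H) v w"
  obtain a b where u: "u = (a,b)" by (cases u)
  obtain c d where v: "v = (c,d)" by (cases v)
  obtain c' d' where w: "w = (c',d')" by (cases w)
  have ab: "a \<in> verts G" "b \<in> verts H" "c \<in> verts G" "d \<in> verts H" using a u v by (auto simp: cart_prod_def)
  have "(c = c' \<and> adj H d d') \<or> (d = d' \<and> adj G c c')" using a(3) v w by (auto simp: cart_prod_def)
  then show "gdist G (fst u) (fst w) + gdist H (snd u) (snd w) \<le> gdist G (fst u) (fst v) + gdist H (snd u) (snd v) + 1"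
    using gd_lip[OF G ab(1) ab(3), of c'] gd_lip[OF H ab(2) ab(4), of d'] u v w by auto
next
  fix u v assume a: "u \<in> verts (cart_prod G H)" "v \<in> verts (cart_prod G H)" "u \<noteq> v"
  obtain a b where u: "u = (a,b)" by (cases u)
  obtain c d where v: "v = (c,d)" by (cases v)
  have ab: "a \<in> verts G" "b \<in> verts H" "c \<in> verts G" "d \<in> verts H" using a u v by (auto simp: cart_prod_def)
  show "\<exists>w. adj (cart_prod G H) v w \<and> gdist G (fst u) (fst w) + gdist H (snd u) (snd w) + 1 =
       gdist G (fst u) (fst v) + gdist H (snd u) (snd v)"
  proof (cases "a = c")
    case False
    then obtain x where x: "adj G c x" "gdist G a x + 1 = gdist G a c" using gd_desc[OF G ab(1) ab(3)] by blast
    show ?thesis using x ab u v by (intro exI[of _ "(x,d)"]) (auto simp: cart_prod_def)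
  next
    case True
    then have "b \<noteq> d" using a u v by auto
    then obtain x where x: "adj H d x" "gdist H b x + 1 = gdist H b d" using gd_desc[OF H ab(2) ab(4)] by blast
    show ?thesis using x ab u v by (intro exI[of _ "(c,x)"]) (auto simp: cart_prod_def)
  qed
qed


lemma interval_md:
  assumes g: "graph K" "connected K" and xyw: "x \<in> verts K" "y \<in> verts K" "w \<in> verts K"
  and i: "y \<in> interval K x w" and md: "max_distant K y x"
  shows "w = y"
proof (rule ccontr)
  assume ne: "w \<noteq> y"
  have e: "gdist K x y + gdist K y w = gdist K x w" using i by (auto simp: interval_def)
  obtain z where z: "adj K y z" "gdist K w z + 1 = gdist K w y" using gd_desc[OF g xyw(3) xyw(2) ne] by blast
  have zv: "z \<in> verts K" using z g by (auto simp: graph_def)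
  have t: "gdist K x w \<le> gdist K x z + gdist K z w" using gd_tri[OF g xyw(1) xyw(3) zv] .
  have s1: "gdist K z w = gdist K w z" "gdist K y w = gdist K w y" "gdist K y x = gdist K x y"
    using gd_sym[OF g zv xyw(3)] gd_sym[OF g xyw(2) xyw(3)] gd_sym[OF g xyw(2) xyw(1)] by auto
  have "gdist K x z \<le> gdist K y x" using md z unfolding max_distant_def nbrs_def by auto
  then show False using t s1 e z by linarith
qed

lemma srs_char:
  assumes g: "graph K" "connected K"
  shows "strong_resolving_set K S \<longleftrightarrow> S \<subseteq> verts K \<and>
    (\<forall>x\<in>verts K. \<forall>y\<in>verts K. mutually_max_distant K x y \<longrightarrow> x \<in> S \<or> y \<in> S)"
proof
  assume S: "strong_resolving_set K S"
  have "x \<in> S \<or> y \<in> S" if xy: "x \<in> verts K" "y \<in> verts K" "mutually_max_distant K x y" for x y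
  proof -
    obtain w where w: "w \<in> S" "strongly_resolves K w x y" using S xy unfolding strong_resolving_set_def mutually_max_distant_def by blast
    have wv: "w \<in> verts K" using w S by (auto simp: strong_resolving_set_def)
    have "w = y \<or> w = x" using w(2) interval_md[OF g xy(1) xy(2) wv] interval_md[OF g xy(2) xy(1) wv] xy(3)
      unfolding strongly_resolves_def mutually_max_distant_def by blast
    then show ?thesis using w by auto
  qed
  then show "S \<subseteq> verts K \<and> (\<forall>x\<in>verts K. \<forall>y\<in>verts K. mutually_max_distant K x y \<longrightarrow> x \<in> S \<or> y \<in> S)"
    using S by (auto simp: strong_resolving_set_def)
next
  assume S: "S \<subseteq> verts K \<and> (\<forall>x\<in>verts K. \<forall>y\<in>verts K. mutually_max_distant K x y \<longrightarrow> x \<in> S \<or> y \<in> S)"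
  have fin: "finite (verts K)" using g by (auto simp: graph_def)
  have maxex: "\<And>A f. finite A \<Longrightarrow> A \<noteq> {} \<Longrightarrow> \<exists>x\<in>A. \<forall>y\<in>A. (f y::nat) \<le> f x"
  proof -
    fix A and f :: "_ \<Rightarrow> nat" assume "finite A" "A \<noteq> {}"
    then have "Max (f ` A) \<in> f ` A" "\<forall>y\<in>A. f y \<le> Max (f ` A)" by auto
    then show "\<exists>x\<in>A. \<forall>y\<in>A. f y \<le> f x" by force
  qed
  let ?d = "gdist K"
  have "\<exists>w\<in>S. strongly_resolves K w u v" if uv: "u \<in> verts K" "v \<in> verts K" "u \<noteq> v" for u v
  proof -
    define X where "X = {x \<in> verts K. u \<in> interval K v x}"
    have "u \<in> X" using uv gd_refl[of u K] by (auto simp: X_def interval_def)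
    then obtain x where x: "x \<in> X" and xmax: "\<forall>x'\<in>X. ?d v x' \<le> ?d v x"
      using maxex[of X "?d v"] fin by (auto simp: X_def)
    have xv: "x \<in> verts K" and ex: "?d v u + ?d u x = ?d v x" using x by (auto simp: X_def interval_def)
    define Y where "Y = {y \<in> verts K. v \<in> interval K x y}"
    have "v \<in> Y" using uv xv gd_refl[of v K] by (auto simp: Y_def interval_def)
    then obtain y where y: "y \<in> Y" and ymax: "\<forall>y'\<in>Y. ?d x y' \<le> ?d x y"
      using maxex[of Y "?d x"] fin by (auto simp: Y_def)
    have yv: "y \<in> verts K" and ey: "?d x v + ?d v y = ?d x y" using y by (auto simp: Y_def interval_def)
    have syms: "?d x v = ?d v x" "?d u x = ?d x u" "?d v u = ?d u v" "?d y x = ?d x y" "?d v y = ?d y v"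
      using gd_sym[OF g xv uv(2)] gd_sym[OF g uv(1) xv] gd_sym[OF g uv(2) uv(1)] gd_sym[OF g yv xv] gd_sym[OF g uv(2) yv] by auto
    have uvpos: "?d u v > 0" using gd_zero[OF g(2) uv(1) uv(2)] uv by auto
    have xy: "x \<noteq> y"
    proof
      assume "x = y"
      then have "?d x y = 0" using gd_refl xv by metis
      then show False using ey ex syms uvpos by linarith
    qed
    have md1: "max_distant K y x" unfolding max_distant_def nbrs_def
    proof (intro ballI, rule ccontr)
      fix w assume w: "w \<in> {w. adj K y w}" "\<not> ?d x w \<le> ?d y x"
      have wv: "w \<in> verts K" using w g by (auto simp: graph_def)
      have l: "?d x w \<le> ?d x y + 1" using gd_lip[OF g xv yv] w by auto
      have l2: "?d v w \<le> ?d v y + 1" using gd_lip[OF g uv(2) yv] w by auto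
      have t: "?d x w \<le> ?d x v + ?d v w" using gd_tri[OF g xv wv uv(2)] .
      have "w \<in> Y" using wv xv uv l l2 t w syms ey unfolding Y_def interval_def by auto
      then show False using ymax w syms by auto
    qed
    have md2: "max_distant K x y" unfolding max_distant_def nbrs_def
    proof (intro ballI, rule ccontr)
      fix z assume z: "z \<in> {w. adj K x w}" "\<not> ?d y z \<le> ?d x y"
      have zv: "z \<in> verts K" using z g by (auto simp: graph_def)
      have l: "?d y z \<le> ?d y x + 1" using gd_lip[OF g yv xv] z by auto
      have l2: "?d u z \<le> ?d u x + 1" using gd_lip[OF g uv(1) xv] z by auto
      have t1: "?d y z \<le> ?d y v + ?d v z" using gd_tri[OF g yv zv uv(2)] .
      have t2: "?d v z \<le> ?d v u + ?d u z" using gd_tri[OF g uv(2) zv uv(1)] .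
      have eq: "?d v u + ?d u z = ?d v z" and gt: "?d v z > ?d v x"
        using l l2 t1 t2 z syms ey ex by linarith+
      have "z \<in> X" using eq zv uv unfolding X_def interval_def by auto
      then show False using xmax gt by auto
    qed
    have "mutually_max_distant K x y" using xy md1 md2 by (auto simp: mutually_max_distant_def)
    then have "x \<in> S \<or> y \<in> S" using S xv yv by blast
    moreover have "strongly_resolves K x u v" using x by (auto simp: X_def strongly_resolves_def)
    moreover have "strongly_resolves K y u v"
    proof -
      have t1: "?d u y \<le> ?d u v + ?d v y" using gd_tri[OF g uv(1) yv uv(2)] .
      have t2: "?d x y \<le> ?d x u + ?d u y" using gd_tri[OF g xv yv uv(1)] .
      have "?d u v + ?d v y = ?d u y" using t1 t2 ex ey syms by linarith
      then show ?thesis using uv unfolding strongly_resolves_def interval_def by auto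
    qed
    ultimately show ?thesis by blast
  qed
  then show "strong_resolving_set K S" using S unfolding strong_resolving_set_def by blast
qed


definition cover :: "'a set \<Rightarrow> 'b set \<Rightarrow> ('a \<times> 'b) set \<Rightarrow> bool" where
  "cover A B S \<longleftrightarrow> (\<forall>a c b d. a \<in> A \<longrightarrow> c \<in> A \<longrightarrow> a \<noteq> c \<longrightarrow> b \<in> B \<longrightarrow> d \<in> B \<longrightarrow> b \<noteq> d \<longrightarrow>
     (a,b) \<in> S \<or> (c,d) \<in> S)"

lemma pairwise_bound:
  assumes fA: "finite A" and fB: "finite B" and T: "T \<subseteq> A \<times> B"
  and pw: "\<forall>a b c d. (a,b) \<in> T \<longrightarrow> (c,d) \<in> T \<longrightarrow> a = c \<or> b = d"
  shows "card T \<le> max (card A) (card B)"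
proof (cases "T = {}")
  case True then show ?thesis by simp
next
  case False
  then obtain a0 b0 where t0: "(a0,b0) \<in> T" by auto
  show ?thesis
  proof (cases "\<forall>a b. (a,b) \<in> T \<longrightarrow> a = a0")
    case True
    then have "T \<subseteq> {a0} \<times> B" using T by auto
    then have "card T \<le> card ({a0} \<times> B)" using fB by (intro card_mono) auto
    then show ?thesis by (simp add: card_cartesian_product_singleton)
  next
    case False
    then obtain a1 b1 where t1: "(a1,b1) \<in> T" "a1 \<noteq> a0" by auto
    then have "b1 = b0" using pw t0 by blast
    have "T \<subseteq> A \<times> {b0}"
    proof
      fix t assume t: "t \<in> T"
      obtain x y where xy: "t = (x,y)" by (cases t)
      have "y = b0"
      proof (rule ccontr)
        assume "y \<noteq> b0"
        then have "x = a0" "x = a1" using pw t0 t1 t xy \<open>b1 = b0\<close> by metis+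
        then show False using t1 by simp
      qed
      then show "t \<in> A \<times> {b0}" using T t xy by auto
    qed
    then have "card T \<le> card (A \<times> {b0})" using fA by (intro card_mono) auto
    then show ?thesis by (simp add: card_cartesian_product)
  qed
qed

lemma cover_lower:
  assumes fA: "finite A" and fB: "finite B" and fS: "finite S" and c: "cover A B S"
  shows "card A * card B - max (card A) (card B) \<le> card S"
proof -
  let ?T = "A \<times> B - S"
  have "card ?T \<le> max (card A) (card B)"
  proof (rule pairwise_bound[OF fA fB])
    show "\<forall>a b c d. (a,b) \<in> ?T \<longrightarrow> (c,d) \<in> ?T \<longrightarrow> a = c \<or> b = d"
      using c unfolding cover_def by blast
  qed auto
  moreover have "card (A \<times> B) = card (A \<times> B \<inter> S) + card ?T"
    using fA fB by (intro card_Int_Diff) auto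
  moreover have "card (A \<times> B \<inter> S) \<le> card S" using fS by (intro card_mono) auto
  ultimately show ?thesis by (simp add: card_cartesian_product)
qed

lemma cover_upper:
  assumes fA: "finite A" and fB: "finite B"
  shows "\<exists>S \<subseteq> A \<times> B. cover A B S \<and> card S = card A * card B - max (card A) (card B)"
proof (cases "A = {} \<or> B = {}")
  case True
  then show ?thesis by (intro exI[of _ "{}"]) (auto simp: cover_def)
next
  case False
  then obtain a0 b0 where ab: "a0 \<in> A" "b0 \<in> B" by auto
  show ?thesis
  proof (cases "card A \<le> card B")
    case True
    let ?S = "A \<times> B - {a0} \<times> B"
    have "card ?S = card (A \<times> B) - card ({a0} \<times> B)"
      using fA fB ab by (intro card_Diff_subset) auto
    then have "card ?S = card A * card B - max (card A) (card B)"
      using True by (simp add: card_cartesian_product)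
    moreover have "cover A B ?S" unfolding cover_def by auto
    ultimately show ?thesis by blast
  next
    case False
    let ?S = "A \<times> B - A \<times> {b0}"
    have "card ?S = card (A \<times> B) - card (A \<times> {b0})"
      using fA fB ab by (intro card_Diff_subset) auto
    then have "card ?S = card A * card B - max (card A) (card B)"
      using False by (simp add: card_cartesian_product)
    moreover have "cover A B ?S" unfolding cover_def by auto
    ultimately show ?thesis by blast
  qed
qed

lemma simp_md:
  assumes g: "graph G" "connected G" and a: "simplicial G a" and c: "c \<in> verts G" and ne: "a \<noteq> c"
  shows "max_distant G a c"
  unfolding max_distant_def
proof
  fix w assume w: "w \<in> nbrs G a"
  have av: "a \<in> verts G" using a by (auto simp: simplicial_def)
  obtain z where z: "adj G a z" "gdist G c z + 1 = gdist G c a"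
    using gd_desc[OF g c av] ne by auto
  have zv: "z \<in> verts G" using z g by (auto simp: graph_def)
  have s: "gdist G c a = gdist G a c" using gd_sym[OF g c av] .
  show "gdist G c w \<le> gdist G a c"
  proof (cases "w = z")
    case True then show ?thesis using z s by simp
  next
    case False
    then have "adj G z w" using a w z unfolding simplicial_def nbrs_def by auto
    then have "gdist G c w \<le> gdist G c z + 1" using gd_lip[OF g c zv] by auto
    then show ?thesis using z s by simp
  qed
qed

lemma mmd_G:
  assumes g: "graph G" "connected G" and b: "boundary G = simplicial_set G"
  and ac: "a \<in> verts G" "c \<in> verts G"
  shows "mutually_max_distant G a c \<longleftrightarrow> a \<noteq> c \<and> a \<in> boundary G \<and> c \<in> boundary G"
proof
  assume m: "mutually_max_distant G a c"
  then have "mutually_max_distant G c a" by (auto simp: mutually_max_distant_def)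
  then show "a \<noteq> c \<and> a \<in> boundary G \<and> c \<in> boundary G"
    using m ac unfolding boundary_def by (auto simp: mutually_max_distant_def)
next
  assume h: "a \<noteq> c \<and> a \<in> boundary G \<and> c \<in> boundary G"
  then have "simplicial G a" "simplicial G c" using b by (auto simp: simplicial_set_def)
  then show "mutually_max_distant G a c"
    using simp_md[OF g] h ac unfolding mutually_max_distant_def by auto
qed

lemma has_nbr:
  assumes g: "graph G" "connected G" and c2: "card (verts G) \<ge> 2" and a: "a \<in> verts G"
  shows "\<exists>w. adj G a w"
proof -
  have "\<not> verts G \<subseteq> {a}"
  proof
    assume "verts G \<subseteq> {a}"
    then have "card (verts G) \<le> card {a}" by (intro card_mono) auto
    then show False using c2 by simp
  qed
  then obtain c where c: "c \<in> verts G" "c \<noteq> a" by auto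
  obtain z where "adj G a z" using gd_desc[OF g c(1) a] c by auto
  then show ?thesis by blast
qed

lemma md_self:
  assumes g: "graph G" "connected G" and c2: "card (verts G) \<ge> 2" and a: "a \<in> verts G"
  shows "\<not> max_distant G a a"
proof
  assume m: "max_distant G a a"
  obtain w where w: "adj G a w" using has_nbr[OF g c2 a] by auto
  have wv: "w \<in> verts G" using w g by (auto simp: graph_def)
  have "gdist G a w \<le> gdist G a a" using m w by (auto simp: max_distant_def nbrs_def)
  then have "gdist G a w = 0" using gd_refl[of a G] a by simp
  then have "a = w" using gd_zero[OF g(2) a wv] by simp
  then show False using w g by (auto simp: graph_def)
qed


lemma prod_md:
  assumes G: "graph G" "connected G" and H: "graph H" "connected H"
  and v: "a \<in> verts G" "c \<in> verts G" "b \<in> verts H" "d \<in> verts H"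
  shows "max_distant (cart_prod G H) (a,b) (c,d) \<longleftrightarrow> max_distant G a c \<and> max_distant H b d"
proof -
  let ?K = "cart_prod G H"
  have D: "\<And>x y z t. x \<in> verts G \<Longrightarrow> z \<in> verts G \<Longrightarrow> y \<in> verts H \<Longrightarrow> t \<in> verts H \<Longrightarrow>
     gdist ?K (x,y) (z,t) = gdist G x z + gdist H y t"
    using prod_dist[OF G H] by (auto simp: cart_prod_def)
  have sG: "gdist G c a = gdist G a c" using gd_sym[OF G v(2) v(1)] .
  have sH: "gdist H d b = gdist H b d" using gd_sym[OF H v(4) v(3)] .
  show ?thesis
  proof
    assume m: "max_distant ?K (a,b) (c,d)"
    have "gdist G c a' \<le> gdist G a c" if a': "adj G a a'" for a'
    proof -
      have a'v: "a' \<in> verts G" using a' G by (auto simp: graph_def)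
      have "(a',b) \<in> nbrs ?K (a,b)" using a' v by (auto simp: nbrs_def cart_prod_def)
      then have "gdist ?K (c,d) (a',b) \<le> gdist ?K (a,b) (c,d)" using m by (auto simp: max_distant_def)
      then show ?thesis using D a'v v sH by simp
    qed
    moreover have "gdist H d b' \<le> gdist H b d" if b': "adj H b b'" for b'
    proof -
      have b'v: "b' \<in> verts H" using b' H by (auto simp: graph_def)
      have "(a,b') \<in> nbrs ?K (a,b)" using b' v by (auto simp: nbrs_def cart_prod_def)
      then have "gdist ?K (c,d) (a,b') \<le> gdist ?K (a,b) (c,d)" using m by (auto simp: max_distant_def)
      then show ?thesis using D b'v v sG by simp
    qed
    ultimately show "max_distant G a c \<and> max_distant H b d" by (auto simp: max_distant_def nbrs_def)
  next
    assume m: "max_distant G a c \<and> max_distant H b d"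
    show "max_distant ?K (a,b) (c,d)" unfolding max_distant_def
    proof
      fix w assume w: "w \<in> nbrs ?K (a,b)"
      obtain x y where xy: "w = (x,y)" by (cases w)
      have "(x = a \<and> adj H b y) \<or> (y = b \<and> adj G a x)" using w xy by (auto simp: nbrs_def cart_prod_def)
      then show "gdist ?K (c,d) w \<le> gdist ?K (a,b) (c,d)"
      proof
        assume h: "x = a \<and> adj H b y"
        then have "y \<in> verts H" using H by (auto simp: graph_def)
        moreover have "gdist H d y \<le> gdist H b d" using m h by (auto simp: max_distant_def nbrs_def)
        ultimately show ?thesis using D xy h v sG by simp
      next
        assume h: "y = b \<and> adj G a x"
        then have "x \<in> verts G" using G by (auto simp: graph_def)
        moreover have "gdist G c x \<le> gdist G a c" using m h by (auto simp: max_distant_def nbrs_def)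
        ultimately show ?thesis using D xy h v sH by simp
      qed
    qed
  qed
qed

lemma prod_mmd:
  assumes G: "graph G" "connected G" "card (verts G) \<ge> 2" and H: "graph H" "connected H" "card (verts H) \<ge> 2"
  and bG: "boundary G = simplicial_set G" and bH: "boundary H = simplicial_set H"
  and v: "a \<in> verts G" "c \<in> verts G" "b \<in> verts H" "d \<in> verts H"
  shows "mutually_max_distant (cart_prod G H) (a,b) (c,d) \<longleftrightarrow>
    (a \<noteq> c \<and> a \<in> boundary G \<and> c \<in> boundary G) \<and> (b \<noteq> d \<and> b \<in> boundary H \<and> d \<in> boundary H)"
proof -
  have "mutually_max_distant (cart_prod G H) (a,b) (c,d) \<longleftrightarrow>
        mutually_max_distant G a c \<and> mutually_max_distant H b d"
    unfolding mutually_max_distant_def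
    using prod_md[OF G(1,2) H(1,2) v] prod_md[OF G(1,2) H(1,2) v(2) v(1) v(4) v(3)]
      md_self[OF G v(1)] md_self[OF H v(3)] by auto
  then show ?thesis using mmd_G[OF G(1,2) bG v(1,2)] mmd_G[OF H(1,2) bH v(3,4)] by simp
qed

lemma arith_eq: "(m::nat) * n - max m n = min (m * (n - 1)) (n * (m - 1))"
proof -
  have e: "m * (n - 1) = m * n - m" "n * (m - 1) = m * n - n" by (simp_all add: diff_mult_distrib2 mult.commute)
  show ?thesis
  proof (cases "m \<le> n")
    case True
    then have "m * n - n \<le> m * n - m" by (rule diff_le_mono2)
    then show ?thesis using True e by (simp add: min_def max_def)
  next
    case False
    then have "m * n - m \<le> m * n - n" by (intro diff_le_mono2) simp
    then show ?thesis using False e by (simp add: min_def max_def)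
  qed
qed

theorem corollary17:
  fixes G :: "'a graph" and H :: "'b graph"
  assumes "graph G" and "graph H"
    and "card (verts G) \<ge> 2" and "card (verts H) \<ge> 2"
    and "connected G" and "connected H"
    and "boundary G = simplicial_set G" and "boundary H = simplicial_set H"
  shows "strong_metric_dim (cart_prod G H) =
    min (card (boundary G) * (card (boundary H) - 1)) (card (boundary H) * (card (boundary G) - 1))"
proof -
  note G = assms(1,5,3) and H = assms(2,6,4)
  let ?K = "cart_prod G H"
  let ?A = "boundary G" and ?B = "boundary H"
  have gK: "graph ?K" using prod_graph assms by auto
  have cK: "connected ?K" using prod_dist assms by auto
  have AV: "?A \<subseteq> verts G" "?B \<subseteq> verts H" by (auto simp: boundary_def)
  have fV: "finite (verts G)" "finite (verts H)" using assms by (auto simp: graph_def)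
  have fA: "finite ?A" "finite ?B" using finite_subset[OF AV(1) fV(1)] finite_subset[OF AV(2) fV(2)] by auto
  have VK: "verts ?K = verts G \<times> verts H" by (simp add: cart_prod_def)
  have srs: "strong_resolving_set ?K S \<longleftrightarrow> S \<subseteq> verts ?K \<and> cover ?A ?B S" for S
  proof -
    have "(\<forall>x\<in>verts ?K. \<forall>y\<in>verts ?K. mutually_max_distant ?K x y \<longrightarrow> x \<in> S \<or> y \<in> S) \<longleftrightarrow> cover ?A ?B S"
    proof
      assume h: "\<forall>x\<in>verts ?K. \<forall>y\<in>verts ?K. mutually_max_distant ?K x y \<longrightarrow> x \<in> S \<or> y \<in> S"
      show "cover ?A ?B S" unfolding cover_def
      proof (intro allI impI)
        fix a c b d assume a: "a \<in> ?A" "c \<in> ?A" "a \<noteq> c" "b \<in> ?B" "d \<in> ?B" "b \<noteq> d"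
        then have v: "a \<in> verts G" "c \<in> verts G" "b \<in> verts H" "d \<in> verts H" using AV by auto
        have "mutually_max_distant ?K (a,b) (c,d)" using prod_mmd[OF G H assms(7,8) v] a by simp
        then show "(a,b) \<in> S \<or> (c,d) \<in> S" using h v VK by auto
      qed
    next
      assume h: "cover ?A ?B S"
      show "\<forall>x\<in>verts ?K. \<forall>y\<in>verts ?K. mutually_max_distant ?K x y \<longrightarrow> x \<in> S \<or> y \<in> S"
      proof (intro ballI impI)
        fix x y assume xy: "x \<in> verts ?K" "y \<in> verts ?K" and m: "mutually_max_distant ?K x y"
        obtain a b where x: "x = (a,b)" by (cases x)
        obtain c d where y: "y = (c,d)" by (cases y)
        have v: "a \<in> verts G" "c \<in> verts G" "b \<in> verts H" "d \<in> verts H" using xy x y VK by auto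
        have "(a \<noteq> c \<and> a \<in> ?A \<and> c \<in> ?A) \<and> (b \<noteq> d \<and> b \<in> ?B \<and> d \<in> ?B)"
          using prod_mmd[OF G H assms(7,8) v] m x y by simp
        then show "x \<in> S \<or> y \<in> S" using h x y unfolding cover_def by blast
      qed
    qed
    then show ?thesis using srs_char[OF gK cK] by simp
  qed
  let ?N = "card ?A * card ?B - max (card ?A) (card ?B)"
  have "strong_metric_dim ?K = ?N"
    unfolding strong_metric_dim_def
  proof (rule Least_equality)
    obtain S where S: "S \<subseteq> ?A \<times> ?B" "cover ?A ?B S" "card S = ?N" using cover_upper[OF fA] by blast
    have "S \<subseteq> verts ?K" using S AV VK by auto
    then show "\<exists>S. strong_resolving_set ?K S \<and> card S = ?N" using S srs by blast
  next
    fix k assume "\<exists>S. strong_resolving_set ?K S \<and> card S = k"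
    then obtain S where S: "S \<subseteq> verts ?K" "cover ?A ?B S" "card S = k" using srs by blast
    have "finite S" using S(1) gK finite_subset by (auto simp: graph_def)
    then show "?N \<le> k" using cover_lower[OF fA \<open>finite S\<close> S(2)] S by simp
  qed
  moreover have "?N = min (card ?A * (card ?B - 1)) (card ?B * (card ?A - 1))"
    by (rule arith_eq)
  ultimately show ?thesis by simp
qed

end
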